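(* Let $d$ be a compatible metric on the Cantor space $\mathbf{C}$, let $h:\mathbf{C}\to\mathbf{C}$ be an isometry of $(\mathbf{C},d)$ and let $\varepsilon>0$. Then there is a finite partition $\mathcal{V}$ of $\mathbf{C}$ into clopen sets, each of diameter less than $\varepsilon$, such that the digraph $(\mathcal{V},h)$ is a disjoint union of directed cycles.
   Context: For a finite clopen partition $\mathcal{V}$ of $\mathbf{C}$ and a map $h$, the digraph $(\mathcal{V},h)$ has vertex set $\mathcal{V}$ and a directed edge from $a$ to $b$ if and only if $h(a)\cap b\ne\emptyset$. *)

theory Defs
  imports "HOL-Analysis.Analysis"
begin

type_synonym cantor = "nat \<Rightarrow> bool"

definition cantor_top :: "cantor topology" where
  "cantor_top = product_topology (\<lambda>_. discrete_topology (UNIV :: bool set)) UNIV"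

definition compatible_metric :: "(cantor \<Rightarrow> cantor \<Rightarrow> real) \<Rightarrow> bool" where
  "compatible_metric d \<longleftrightarrow> Metric_space UNIV d \<and> Metric_space.mtopology UNIV d = cantor_top"

definition diam_d :: "('a \<Rightarrow> 'a \<Rightarrow> real) \<Rightarrow> 'a set \<Rightarrow> real" where
  "diam_d d A = (SUP p\<in>A \<times> A. d (fst p) (snd p))"

definition dg_edge :: "('a \<Rightarrow> 'a) \<Rightarrow> 'a set \<Rightarrow> 'a set \<Rightarrow> bool" where
  "dg_edge h a b \<longleftrightarrow> h ` a \<inter> b \<noteq> {}"

text \<open>A finite digraph on vertex set V with edge relation E is a disjoint union of
  directed cycles (loops count as cycles of length one) iff every vertex has exactly
  one out-neighbour and exactly one in-neighbour.\<close>
definition union_of_dicycles :: "'v set \<Rightarrow> ('v \<Rightarrow> 'v \<Rightarrow> bool) \<Rightarrow> bool" where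
  "union_of_dicycles V E \<longleftrightarrow>
     finite V \<and> (\<forall>a\<in>V. \<exists>!b. b \<in> V \<and> E a b) \<and> (\<forall>b\<in>V. \<exists>!a. a \<in> V \<and> E a b)"

end

theory Submission imports Defs begin

lemma cantor_compact: "compact_space cantor_top"
  unfolding cantor_top_def
  by (simp add: compact_space_product_topology compact_space_discrete_topology)

lemma topspace_cantor [simp]: "topspace cantor_top = UNIV"
  unfolding cantor_top_def by simp

lemma coord_clopen: "openin cantor_top {z. z i = b} \<and> closedin cantor_top {z. z i = b}"
proof -
  have c: "continuous_map cantor_top (discrete_topology UNIV) (\<lambda>x. x i)"
    unfolding cantor_top_def by (rule continuous_map_product_projection) simp
  have "openin cantor_top {x \<in> topspace cantor_top. x i \<in> {b}}"
    by (rule openin_continuous_map_preimage[OF c]) simp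
  moreover have "closedin cantor_top {x \<in> topspace cantor_top. x i \<in> {b}}"
    by (rule closedin_continuous_map_preimage[OF c]) simp
  ultimately show ?thesis by simp
qed

lemma cyl_clopen:
  assumes "finite F"
  shows "openin cantor_top {z. \<forall>i\<in>F. z i = x i} \<and> closedin cantor_top {z. \<forall>i\<in>F. z i = x i}"
  using assms
proof (induction F rule: finite_induct)
  case empty
  have "{z. \<forall>i\<in>{}. z i = x i} = topspace cantor_top" by simp
  then show ?case by (metis closedin_topspace openin_topspace)
next
  case (insert i F)
  have e: "{z. \<forall>j\<in>insert i F. z j = x j} = {z. z i = x i} \<inter> {z. \<forall>j\<in>F. z j = x j}" by auto
  show ?case unfolding e using insert.IH coord_clopen[of i "x i"] by (simp add: openin_Int closedin_Int)
qed

lemma clopen_base: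
  assumes "openin cantor_top S" "x \<in> S"
  shows "\<exists>W. openin cantor_top W \<and> closedin cantor_top W \<and> x \<in> W \<and> W \<subseteq> S"
proof -
  have "\<exists>U. finite {i \<in> UNIV. U i \<noteq> topspace (discrete_topology UNIV)} \<and>
                 (\<forall>i \<in> UNIV. openin (discrete_topology UNIV) (U i)) \<and> x \<in> Pi\<^sub>E UNIV U \<and> Pi\<^sub>E UNIV U \<subseteq> S"
  proof -
    have "openin (product_topology (\<lambda>_. discrete_topology (UNIV::bool set)) UNIV) S"
      using assms(1) by (simp add: cantor_top_def)
    from this[unfolded openin_product_topology_alt] assms(2) show ?thesis by (rule bspec)
  qed
  then obtain U where U0: "finite {i \<in> UNIV. U i \<noteq> topspace (discrete_topology (UNIV::bool set))}"
     and U2: "x \<in> Pi\<^sub>E UNIV U" and U3: "Pi\<^sub>E UNIV U \<subseteq> S"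
    by blast
  define F where "F = {i. U i \<noteq> UNIV}"
  have fF: "finite F" using U0 unfolding F_def by simp
  have xU: "x i \<in> U i" for i using U2 by (simp add: PiE_UNIV_domain Pi_iff)
  let ?W = "{z. \<forall>i\<in>F. z i = x i}"
  have "?W \<subseteq> Pi\<^sub>E UNIV U"
  proof
    fix z assume z: "z \<in> ?W"
    have "z i \<in> U i" for i
    proof (cases "i \<in> F")
      case True
      then show ?thesis using z xU[of i] by simp
    next
      case False
      then show ?thesis by (simp add: F_def)
    qed
    then show "z \<in> Pi\<^sub>E UNIV U" by (simp add: PiE_UNIV_domain Pi_iff)
  qed
  then have "?W \<subseteq> S" using U3 by (rule order_trans)
  moreover have "x \<in> ?W" by simp
  ultimately show ?thesis using cyl_clopen[OF fF, of x] by blast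
qed


lemma ball_cover:
  assumes cm: "compatible_metric d" and r: "\<And>x. r x > 0"
  shows "\<exists>C. finite C \<and> C \<noteq> {} \<and> (\<forall>z. \<exists>c\<in>C. d c z < r c)"
proof -
  interpret M: Metric_space UNIV d using cm by (simp add: compatible_metric_def)
  have T: "M.mtopology = cantor_top" using cm by (simp add: compatible_metric_def)
  have cpt: "compactin M.mtopology UNIV"
    using cantor_compact unfolding T compact_space_def by simp
  then have cov: "\<forall>U. (\<forall>x\<in>U. openin M.mtopology x) \<and> UNIV \<subseteq> \<Union>U \<longrightarrow> (\<exists>F. finite F \<and> F \<subseteq> U \<and> UNIV \<subseteq> \<Union>F)"
    unfolding compactin_def by blast
  have "(\<forall>x\<in>range (\<lambda>x. M.mball x (r x)). openin M.mtopology x)" by blast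
  moreover have "UNIV \<subseteq> \<Union>(range (\<lambda>x. M.mball x (r x)))"
  proof
    fix z :: cantor
    have "z \<in> M.mball z (r z)" using r[of z] by simp
    then show "z \<in> \<Union>(range (\<lambda>x. M.mball x (r x)))" by blast
  qed
  ultimately obtain F where F: "finite F" "F \<subseteq> range (\<lambda>x. M.mball x (r x))" "UNIV \<subseteq> \<Union>F"
    using cov by meson
  then obtain C where C: "finite C" "F = (\<lambda>x. M.mball x (r x)) ` C"
    by (meson finite_subset_image)
  have "\<forall>z. \<exists>c\<in>C. d c z < r c"
  proof
    fix z :: cantor
    have "z \<in> \<Union>F" using F(3) by blast
    then obtain c where "c \<in> C" "z \<in> M.mball c (r c)" using C(2) by blast
    then show "\<exists>c\<in>C. d c z < r c" by auto
  qed
  moreover then have "C \<noteq> {}" by blast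
  ultimately show ?thesis using C(1) by blast
qed

lemma sep_clopen:
  assumes cm: "compatible_metric d" and W: "openin cantor_top W" "closedin cantor_top W"
  shows "\<exists>\<delta>>0. \<forall>z w. z \<in> W \<and> d z w < \<delta> \<longrightarrow> w \<in> W"
proof -
  interpret M: Metric_space UNIV d using cm by (simp add: compatible_metric_def)
  have T: "M.mtopology = cantor_top" using cm by (simp add: compatible_metric_def)
  have oW: "openin M.mtopology W" using W T by simp
  have oC: "openin M.mtopology (UNIV - W)" using W(2) T by (simp add: closedin_def)
  have "\<forall>x. \<exists>r>0. M.mball x (2*r) \<subseteq> W \<or> M.mball x (2*r) \<subseteq> UNIV - W"
  proof
    fix x
    show "\<exists>r>0. M.mball x (2*r) \<subseteq> W \<or> M.mball x (2*r) \<subseteq> UNIV - W"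
    proof (cases "x \<in> W")
      case True
      then obtain r where "r>0" "M.mball x r \<subseteq> W" using oW True unfolding M.openin_mtopology by blast
      then show ?thesis by (intro exI[of _ "r/2"]) auto
    next
      case False
      then have "x \<in> UNIV - W" by simp
      then obtain r where "r>0" "M.mball x r \<subseteq> UNIV - W" using oC \<open>x \<in> UNIV - W\<close> unfolding M.openin_mtopology by blast
      then show ?thesis by (intro exI[of _ "r/2"]) auto
    qed
  qed
  then have "\<exists>r. \<forall>x. r x > 0 \<and> (M.mball x (2 * r x) \<subseteq> W \<or> M.mball x (2 * r x) \<subseteq> UNIV - W)"
    by (rule choice)
  then obtain r where r: "\<And>x. r x > 0" "\<And>x. M.mball x (2 * r x) \<subseteq> W \<or> M.mball x (2 * r x) \<subseteq> UNIV - W"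
    by blast
  have "\<exists>C. finite C \<and> C \<noteq> {} \<and> (\<forall>z. \<exists>c\<in>C. d c z < r c)"
    by (rule ball_cover[OF cm r(1)])
  then obtain C where C: "finite C" "C \<noteq> {}" "\<forall>z. \<exists>c\<in>C. d c z < r c"
    by (elim exE conjE)
  have C3: "\<exists>c\<in>C. d c z < r c" for z using C(3) by (rule spec)
  define \<delta> where "\<delta> = Min (r ` C)"
  have dpos: "\<delta> > 0" unfolding \<delta>_def using C(1,2) r(1) by (simp add: Min_gr_iff)
  have dle: "\<delta> \<le> r c" if "c \<in> C" for c unfolding \<delta>_def using C(1) that by simp
  have "\<forall>z w. z \<in> W \<and> d z w < \<delta> \<longrightarrow> w \<in> W"
  proof (intro allI impI)
    fix z w assume zw: "z \<in> W \<and> d z w < \<delta>"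
    obtain c where c: "c \<in> C" "d c z < r c" using C3[of z] by blast
    have "d c w \<le> d c z + d z w" by (rule M.triangle) auto
    then have "d c w < 2 * r c" using c zw dle[OF c(1)] by linarith
    then have wb: "w \<in> M.mball c (2 * r c)" by simp
    have zb: "z \<in> M.mball c (2 * r c)" using c r(1)[of c] by simp
    show "w \<in> W" using r(2)[of c] wb zb zw by blast
  qed
  then show ?thesis using dpos by blast
qed

lemma sep_family:
  assumes cm: "compatible_metric d" and fin: "finite \<W>"
    and cl: "\<forall>W\<in>\<W>. openin cantor_top W \<and> closedin cantor_top W"
  shows "\<exists>\<delta>>0. \<forall>W\<in>\<W>. \<forall>z w. z \<in> W \<and> d z w < \<delta> \<longrightarrow> w \<in> W"
  using fin cl
proof (induction \<W> rule: finite_induct)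
  case empty
  show ?case by (intro exI[of _ 1]) simp
next
  case (insert W \<W>)
  obtain \<delta>1 where d1: "\<delta>1 > 0" "\<forall>z w. z \<in> W \<and> d z w < \<delta>1 \<longrightarrow> w \<in> W"
    using sep_clopen[OF cm] insert.prems by blast
  obtain \<delta>2 where d2: "\<delta>2 > 0" "\<forall>V\<in>\<W>. \<forall>z w. z \<in> V \<and> d z w < \<delta>2 \<longrightarrow> w \<in> V"
    using insert.IH insert.prems by blast
  show ?case
    apply (intro exI[of _ "min \<delta>1 \<delta>2"] conjI)
    using d1 d2 by auto
qed

lemma small_cover:
  assumes cm: "compatible_metric d" and e: "\<epsilon> > 0"
  shows "\<exists>\<W>. finite \<W> \<and> (\<forall>W\<in>\<W>. openin cantor_top W \<and> closedin cantor_top W) \<and> \<Union>\<W> = UNIV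
            \<and> (\<forall>W\<in>\<W>. \<forall>a\<in>W. \<forall>b\<in>W. d a b < \<epsilon>/2)"
proof -
  interpret M: Metric_space UNIV d using cm by (simp add: compatible_metric_def)
  have T: "M.mtopology = cantor_top" using cm by (simp add: compatible_metric_def)
  have "\<forall>x. \<exists>W. openin cantor_top W \<and> closedin cantor_top W \<and> x \<in> W \<and> W \<subseteq> M.mball x (\<epsilon>/4)"
  proof
    fix x
    have "openin cantor_top (M.mball x (\<epsilon>/4))" using T M.openin_mball by metis
    moreover have "x \<in> M.mball x (\<epsilon>/4)" using e by simp
    ultimately show "\<exists>W. openin cantor_top W \<and> closedin cantor_top W \<and> x \<in> W \<and> W \<subseteq> M.mball x (\<epsilon>/4)"
      by (rule clopen_base)
  qed
  then obtain Wf where Wf: "\<And>x. openin cantor_top (Wf x)" "\<And>x. closedin cantor_top (Wf x)"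
     "\<And>x. x \<in> Wf x" "\<And>x. Wf x \<subseteq> M.mball x (\<epsilon>/4)"
    by metis
  have cpt: "compactin cantor_top UNIV"
    using cantor_compact unfolding compact_space_def by simp
  then have cov: "\<forall>U. (\<forall>x\<in>U. openin cantor_top x) \<and> UNIV \<subseteq> \<Union>U \<longrightarrow> (\<exists>F. finite F \<and> F \<subseteq> U \<and> UNIV \<subseteq> \<Union>F)"
    unfolding compactin_def by blast
  have "\<forall>x\<in>range Wf. openin cantor_top x" using Wf(1) by blast
  moreover have "UNIV \<subseteq> \<Union>(range Wf)" using Wf(3) by blast
  ultimately obtain F where F: "finite F" "F \<subseteq> range Wf" "UNIV \<subseteq> \<Union>F"
    using cov by meson
  have "\<forall>W\<in>F. \<forall>a\<in>W. \<forall>b\<in>W. d a b < \<epsilon>/2"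
  proof (intro ballI)
    fix W a b assume W: "W \<in> F" and a: "a \<in> W" and b: "b \<in> W"
    obtain x where x: "W = Wf x" using W F(2) by blast
    have "d x a < \<epsilon>/4" "d x b < \<epsilon>/4" using a b x Wf(4)[of x] by auto
    moreover have "d a b \<le> d a x + d x b" by (rule M.triangle) auto
    moreover have "d a x = d x a" by (rule M.commute)
    ultimately show "d a b < \<epsilon>/2" by linarith
  qed
  moreover have "\<forall>W\<in>F. openin cantor_top W \<and> closedin cantor_top W" using F(2) Wf(1,2) by blast
  moreover have "\<Union>F = UNIV" using F(3) by blast
  ultimately show ?thesis using F(1) by blast
qed


lemma iso_surj:
  assumes cm: "compatible_metric d" and iso: "\<forall>x y. d (h x) (h y) = d x y"
  shows "surj h"
proof -
  interpret M: Metric_space UNIV d using cm by (simp add: compatible_metric_def)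
  have T: "M.mtopology = cantor_top" using cm by (simp add: compatible_metric_def)
  have pow: "d ((h^^n) a) ((h^^n) b) = d a b" for n a b
    by (induction n) (simp_all add: iso)
  have near: "\<exists>x. d y (h x) < \<eta>" if eta: "\<eta> > 0" for y \<eta>
  proof -
    have rpos: "\<And>x::cantor. (\<lambda>_. \<eta>/2) x > 0" using eta by simp
    have "\<exists>C. finite C \<and> C \<noteq> {} \<and> (\<forall>z. \<exists>c\<in>C. d c z < (\<lambda>_. \<eta>/2) c)"
      by (rule ball_cover[OF cm rpos])
    then obtain C where C: "finite C" "C \<noteq> {}" "\<forall>z. \<exists>c\<in>C. d c z < \<eta>/2"
      by (elim exE conjE) simp
    define c where "c n = (SOME c. c \<in> C \<and> d c ((h^^n) y) < \<eta>/2)" for n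
    have cC: "c n \<in> C \<and> d (c n) ((h^^n) y) < \<eta>/2" for n
    proof -
      have "\<exists>c. c \<in> C \<and> d c ((h^^n) y) < \<eta>/2" using C(3) by blast
      then show ?thesis unfolding c_def by (rule someI_ex)
    qed
    have "\<not> inj_on c {..card C}"
    proof
      assume "inj_on c {..card C}"
      moreover have "c ` {..card C} \<subseteq> C" using cC by blast
      ultimately have "card {..card C} \<le> card C" using C(1) by (rule card_inj_on_le)
      then show False by simp
    qed
    then obtain i j where ij0: "i \<noteq> j" "c i = c j" unfolding inj_on_def by blast
    have "\<exists>i j. i < j \<and> c i = c j"
    proof (cases "i < j")
      case True then show ?thesis using ij0 by blast
    next
      case False then have "j < i" using ij0(1) by simp
      then show ?thesis using ij0(2) by metis
    qed
    then obtain i j where ij: "i < j" "c i = c j" by blast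
    have "d ((h^^i) y) ((h^^j) y) \<le> d ((h^^i) y) (c i) + d (c i) ((h^^j) y)"
      by (rule M.triangle) auto
    moreover have "d ((h^^i) y) (c i) = d (c i) ((h^^i) y)" by (rule M.commute)
    moreover have "d (c i) ((h^^i) y) < \<eta>/2" using cC[of i] by simp
    moreover have "d (c i) ((h^^j) y) < \<eta>/2" using cC[of j] ij(2) by simp
    ultimately have lt: "d ((h^^i) y) ((h^^j) y) < \<eta>" by linarith
    obtain k where k: "j = i + Suc k" using ij(1) less_iff_Suc_add by auto
    have "(h^^j) y = (h^^i) (h ((h^^k) y))" unfolding k funpow_add by simp
    then have "d y (h ((h^^k) y)) < \<eta>" using lt pow[of i y "h ((h^^k) y)"] by simp
    then show ?thesis by blast
  qed
  have cont: "continuous_map M.mtopology M.mtopology h"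
    unfolding continuous_map_def
  proof (intro conjI allI impI)
    show "h \<in> topspace M.mtopology \<rightarrow> topspace M.mtopology" by simp
    fix U assume U: "openin M.mtopology U"
    show "openin M.mtopology {x \<in> topspace M.mtopology. h x \<in> U}"
      unfolding M.openin_mtopology
    proof (intro conjI allI impI)
      show "{x \<in> topspace M.mtopology. h x \<in> U} \<subseteq> UNIV" by simp
      fix x assume x: "x \<in> {x \<in> topspace M.mtopology. h x \<in> U}"
      then have "h x \<in> U" by simp
      then obtain r where r: "r > 0" "M.mball (h x) r \<subseteq> U" using U unfolding M.openin_mtopology by blast
      have "M.mball x r \<subseteq> {x \<in> topspace M.mtopology. h x \<in> U}"
      proof
        fix z assume "z \<in> M.mball x r"
        then have "d (h x) (h z) < r" using iso by simp
        then have "h z \<in> M.mball (h x) r" by simp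
        then show "z \<in> {x \<in> topspace M.mtopology. h x \<in> U}" using r(2) by auto
      qed
      then show "\<exists>r>0. M.mball x r \<subseteq> {x \<in> topspace M.mtopology. h x \<in> U}" using r(1) by blast
    qed
  qed
  have cpt: "compactin M.mtopology UNIV"
    using cantor_compact unfolding T compact_space_def by simp
  have "compactin M.mtopology (h ` UNIV)" by (rule image_compactin[OF cpt cont])
  then have "closedin M.mtopology (range h)" by (rule compactin_imp_closedin[OF M.Hausdorff_space_mtopology])
  then have oc: "openin M.mtopology (UNIV - range h)" by (simp add: closedin_def)
  show "surj h"
  proof (rule ccontr)
    assume "\<not> surj h"
    then obtain y where y: "y \<notin> range h" by blast
    then have "y \<in> UNIV - range h" by simp
    then obtain r where r: "r > 0" "M.mball y r \<subseteq> UNIV - range h"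
      using oc unfolding M.openin_mtopology by blast
    obtain x where "d y (h x) < r" using near[OF r(1)] by blast
    then have "h x \<in> M.mball y r" by simp
    then show False using r(2) by blast
  qed
qed


theorem proposition6p3:
  fixes d :: "cantor \<Rightarrow> cantor \<Rightarrow> real" and h :: "cantor \<Rightarrow> cantor" and \<epsilon> :: real
  assumes "compatible_metric d"
    and "\<forall>x y. d (h x) (h y) = d x y"
    and "\<epsilon> > 0"
  shows "\<exists>\<V> :: cantor set set.
           finite \<V> \<and> \<Union>\<V> = UNIV \<and> {} \<notin> \<V> \<and>
           (\<forall>A\<in>\<V>. \<forall>B\<in>\<V>. A \<noteq> B \<longrightarrow> A \<inter> B = {}) \<and>
           (\<forall>A\<in>\<V>. closedin cantor_top A \<and> openin cantor_top A \<and> diam_d d A < \<epsilon>) \<and>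
           union_of_dicycles \<V> (dg_edge h)"
proof -
  note cm = assms(1) and iso = assms(2)
  interpret M: Metric_space UNIV d using cm by (simp add: compatible_metric_def)
  have T: "M.mtopology = cantor_top" using cm by (simp add: compatible_metric_def)
  have "\<exists>\<W>. finite \<W> \<and> (\<forall>W\<in>\<W>. openin cantor_top W \<and> closedin cantor_top W) \<and> \<Union>\<W> = UNIV
            \<and> (\<forall>W\<in>\<W>. \<forall>a\<in>W. \<forall>b\<in>W. d a b < \<epsilon>/2)"
    by (rule small_cover[OF cm assms(3)])
  then obtain \<W> where Wfin: "finite \<W>" and Wcl: "\<forall>W\<in>\<W>. openin cantor_top W \<and> closedin cantor_top W"
     and Wun: "\<Union>\<W> = UNIV" and Wsm: "\<forall>W\<in>\<W>. \<forall>a\<in>W. \<forall>b\<in>W. d a b < \<epsilon>/2"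
    by (elim exE conjE)
  have "\<exists>\<delta>>0. \<forall>W\<in>\<W>. \<forall>z w. z \<in> W \<and> d z w < \<delta> \<longrightarrow> w \<in> W"
    by (rule sep_family[OF cm Wfin Wcl])
  then obtain \<delta> where dpos: "\<delta> > 0" and sep: "\<forall>W\<in>\<W>. \<forall>z w. z \<in> W \<and> d z w < \<delta> \<longrightarrow> w \<in> W"
    by (elim exE conjE)
  define R where "R = (\<lambda>a b. d a b < \<delta>)"
  define cls where "cls x = {y. R\<^sup>*\<^sup>* x y}" for x
  have Rsym: "R b a" if "R a b" for a b using that by (simp add: R_def M.commute)
  have star_sym: "R\<^sup>*\<^sup>* b a" if "R\<^sup>*\<^sup>* a b" for a b
    using that
  proof (induction rule: rtranclp_induct)
    case base then show ?case by simp
  next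
    case (step y z)
    have "R z y" using step.hyps(2) by (rule Rsym)
    then show ?case using step.IH by (rule converse_rtranclp_into_rtranclp)
  qed
  have self: "x \<in> cls x" for x by (simp add: cls_def)
  have cls_eq: "cls y = cls x" if "y \<in> cls x" for x y
  proof -
    have xy: "R\<^sup>*\<^sup>* x y" using that by (simp add: cls_def)
    have yx: "R\<^sup>*\<^sup>* y x" using xy by (rule star_sym)
    show ?thesis
    proof (intro set_eqI iffI)
      fix z assume "z \<in> cls y"
      then have "R\<^sup>*\<^sup>* y z" by (simp add: cls_def)
      then show "z \<in> cls x" using xy unfolding cls_def by simp
    next
      fix z assume "z \<in> cls x"
      then have "R\<^sup>*\<^sup>* x z" by (simp add: cls_def)
      then show "z \<in> cls y" using yx unfolding cls_def by simp
    qed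
  qed
  have cls_meet: "cls x = cls y" if "z \<in> cls x" "z \<in> cls y" for x y z
    using cls_eq[OF that(1)] cls_eq[OF that(2)] by simp
  have stay: "b \<in> W" if "W \<in> \<W>" "R\<^sup>*\<^sup>* a b" "a \<in> W" for W a b
    using that(2,3)
  proof (induction rule: rtranclp_induct)
    case base then show ?case by simp
  next
    case (step y z)
    have "y \<in> W" using step.IH step.prems by simp
    then show ?case using sep that(1) step.hyps(2) unfolding R_def by blast
  qed
  have small: "\<exists>W\<in>\<W>. cls x \<subseteq> W" for x
  proof -
    have "x \<in> \<Union>\<W>" using Wun by simp
    then obtain W where W: "W \<in> \<W>" "x \<in> W" by blast
    have "cls x \<subseteq> W"
    proof
      fix y assume "y \<in> cls x"
      then have "R\<^sup>*\<^sup>* x y" by (simp add: cls_def)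
      then show "y \<in> W" using stay[OF W(1) _ W(2)] by simp
    qed
    then show ?thesis using W(1) by blast
  qed
  have opn: "openin cantor_top (cls x)" for x
    unfolding T[symmetric] M.openin_mtopology
  proof (intro conjI allI impI)
    show "cls x \<subseteq> UNIV" by simp
    fix z assume z: "z \<in> cls x"
    have "M.mball z \<delta> \<subseteq> cls x"
    proof
      fix w assume "w \<in> M.mball z \<delta>"
      then have "R z w" by (simp add: R_def)
      moreover have "R\<^sup>*\<^sup>* x z" using z by (simp add: cls_def)
      ultimately have "R\<^sup>*\<^sup>* x w" by simp
      then show "w \<in> cls x" by (simp add: cls_def)
    qed
    then show "\<exists>r>0. M.mball z r \<subseteq> cls x" using dpos by blast
  qed
  have cld: "closedin cantor_top (cls x)" for x
  proof -
    have "openin M.mtopology (UNIV - cls x)"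
      unfolding M.openin_mtopology
    proof (intro conjI allI impI)
      show "UNIV - cls x \<subseteq> UNIV" by simp
      fix w assume w: "w \<in> UNIV - cls x"
      have "M.mball w \<delta> \<subseteq> UNIV - cls x"
      proof
        fix v assume v: "v \<in> M.mball w \<delta>"
        have "v \<notin> cls x"
        proof
          assume "v \<in> cls x"
          then have "R\<^sup>*\<^sup>* x v" by (simp add: cls_def)
          moreover have "R v w" using v by (simp add: R_def M.commute)
          ultimately have "R\<^sup>*\<^sup>* x w" by simp
          then show False using w by (simp add: cls_def)
        qed
        then show "v \<in> UNIV - cls x" by simp
      qed
      then show "\<exists>r>0. M.mball w r \<subseteq> UNIV - cls x" using dpos by blast
    qed
    then show ?thesis unfolding T closedin_def by simp
  qed
  have diam: "diam_d d (cls x) < \<epsilon>" for x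
  proof -
    obtain W where W: "W \<in> \<W>" "cls x \<subseteq> W" using small[of x] by blast
    have "(SUP p\<in>cls x \<times> cls x. d (fst p) (snd p)) \<le> \<epsilon>/2"
    proof (rule cSUP_least)
      show "cls x \<times> cls x \<noteq> {}" using self[of x] by blast
      fix p assume "p \<in> cls x \<times> cls x"
      then have "fst p \<in> W" "snd p \<in> W" using W(2) by auto
      then show "d (fst p) (snd p) \<le> \<epsilon>/2" using Wsm W(1) by fastforce
    qed
    then show ?thesis unfolding diam_d_def using assms(3) by linarith
  qed
  have fin: "finite (range cls)"
  proof -
    have cpt: "compactin cantor_top UNIV"
      using cantor_compact unfolding compact_space_def by simp
    then have cov: "\<forall>U. (\<forall>x\<in>U. openin cantor_top x) \<and> UNIV \<subseteq> \<Union>U \<longrightarrow> (\<exists>F. finite F \<and> F \<subseteq> U \<and> UNIV \<subseteq> \<Union>F)"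
      unfolding compactin_def by blast
    have "(\<forall>x\<in>range cls. openin cantor_top x) \<and> UNIV \<subseteq> \<Union>(range cls)"
      using opn self by blast
    then have "\<exists>F. finite F \<and> F \<subseteq> range cls \<and> UNIV \<subseteq> \<Union>F" by (rule mp[OF spec[OF cov, of "range cls"]])
    then obtain F where F: "finite F" "F \<subseteq> range cls" "UNIV \<subseteq> \<Union>F" by (elim exE conjE)
    have "range cls \<subseteq> F"
    proof
      fix A assume "A \<in> range cls"
      then obtain x where x: "A = cls x" by blast
      have "x \<in> \<Union>F" using F(3) by blast
      then obtain B where B: "B \<in> F" "x \<in> B" by blast
      then obtain y where y: "B = cls y" using F(2) by blast
      have "cls x = cls y" using cls_eq[of x y] B(2) y by simp
      then show "A \<in> F" using x y B(1) by simp
    qed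
    then show ?thesis using F(1) by (rule finite_subset)
  qed
  have hstar: "R\<^sup>*\<^sup>* (h a) (h b)" if "R\<^sup>*\<^sup>* a b" for a b
    using that
  proof (induction rule: rtranclp_induct)
    case base then show ?case by simp
  next
    case (step y z)
    have "R (h y) (h z)" using step.hyps(2) iso by (simp add: R_def)
    then show ?case using step.IH by simp
  qed
  have sj: "surj h" by (rule iso_surj[OF cm iso])
  have ij: "inj h"
  proof (rule injI)
    fix a b assume "h a = h b"
    have "d a b = d (h a) (h b)" using iso by simp
    also have "\<dots> = 0" using \<open>h a = h b\<close> by simp
    finally show "a = b" by simp
  qed
  define g where "g = inv h"
  have hg: "h (g y) = y" for y unfolding g_def using sj by (simp add: surj_f_inv_f)
  have gh: "g (h x) = x" for x unfolding g_def using ij by (simp add: inv_f_f)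
  have giso: "d (g u) (g v) = d u v" for u v
  proof -
    have "d (g u) (g v) = d (h (g u)) (h (g v))" using iso by simp
    then show ?thesis by (simp add: hg)
  qed
  have gstar: "R\<^sup>*\<^sup>* (g a) (g b)" if "R\<^sup>*\<^sup>* a b" for a b
    using that
  proof (induction rule: rtranclp_induct)
    case base then show ?case by simp
  next
    case (step y z)
    have "R (g y) (g z)" using step.hyps(2) giso by (simp add: R_def)
    then show ?case using step.IH by simp
  qed
  have out: "\<exists>!B. B \<in> range cls \<and> dg_edge h A B" if A: "A \<in> range cls" for A
  proof -
    obtain a where a: "A = cls a" using A by blast
    show ?thesis
    proof (rule ex1I[of _ "cls (h a)"])
      show "cls (h a) \<in> range cls \<and> dg_edge h A (cls (h a))"
        unfolding dg_edge_def a using self[of a] self[of "h a"] by blast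
      fix B assume B: "B \<in> range cls \<and> dg_edge h A B"
      then obtain b where b: "B = cls b" by blast
      obtain z where z: "z \<in> cls a" "h z \<in> cls b" using B unfolding dg_edge_def a b by blast
      have "R\<^sup>*\<^sup>* a z" using z(1) by (simp add: cls_def)
      then have "R\<^sup>*\<^sup>* (h a) (h z)" by (rule hstar)
      then have "h z \<in> cls (h a)" by (simp add: cls_def)
      then show "B = cls (h a)" using cls_meet[OF z(2)] b by simp
    qed
  qed
  have inn: "\<exists>!A. A \<in> range cls \<and> dg_edge h A B" if B: "B \<in> range cls" for B
  proof -
    obtain b where b: "B = cls b" using B by blast
    show ?thesis
    proof (rule ex1I[of _ "cls (g b)"])
      have "h (g b) \<in> h ` cls (g b)" using self[of "g b"] by blast
      then have "b \<in> h ` cls (g b) \<inter> cls b" using hg[of b] self[of b] by simp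
      then show "cls (g b) \<in> range cls \<and> dg_edge h (cls (g b)) B"
        unfolding dg_edge_def b by blast
      fix A assume A: "A \<in> range cls \<and> dg_edge h A B"
      then obtain a where a: "A = cls a" by blast
      obtain z where z: "z \<in> cls a" "h z \<in> cls b" using A unfolding dg_edge_def a b by blast
      have "R\<^sup>*\<^sup>* b (h z)" using z(2) by (simp add: cls_def)
      then have "R\<^sup>*\<^sup>* (h z) b" by (rule star_sym)
      then have "R\<^sup>*\<^sup>* (g (h z)) (g b)" by (rule gstar)
      then have "g b \<in> cls z" by (simp add: cls_def gh)
      then have "cls (g b) = cls z" by (rule cls_eq)
      moreover have "cls z = cls a" using z(1) by (rule cls_eq)
      ultimately show "A = cls (g b)" using a by simp
    qed
  qed
  show ?thesis
  proof (intro exI[of _ "range cls"] conjI)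
    show "finite (range cls)" by (rule fin)
    show "\<Union>(range cls) = UNIV" using self by blast
    show "{} \<notin> range cls" using self by blast
    show "\<forall>A\<in>range cls. \<forall>B\<in>range cls. A \<noteq> B \<longrightarrow> A \<inter> B = {}"
    proof (intro ballI impI)
      fix A B assume A: "A \<in> range cls" and B: "B \<in> range cls" and ne: "A \<noteq> B"
      obtain a where a: "A = cls a" using A by blast
      obtain b where b: "B = cls b" using B by blast
      show "A \<inter> B = {}"
      proof (rule ccontr)
        assume "A \<inter> B \<noteq> {}"
        then obtain z where "z \<in> cls a" "z \<in> cls b" using a b by blast
        then have "cls a = cls b" by (rule cls_meet)
        then show False using ne a b by simp
      qed
    qed
    show "\<forall>A\<in>range cls. closedin cantor_top A \<and> openin cantor_top A \<and> diam_d d A < \<epsilon>"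
      using cld opn diam by blast
    show "union_of_dicycles (range cls) (dg_edge h)"
      unfolding union_of_dicycles_def
    proof (intro conjI ballI)
      show "finite (range cls)" by (rule fin)
      fix A assume "A \<in> range cls"
      then show "\<exists>!B. B \<in> range cls \<and> dg_edge h A B" by (rule out)
    next
      fix B assume "B \<in> range cls"
      then show "\<exists>!A. A \<in> range cls \<and> dg_edge h A B" by (rule inn)
    qed
  qed
qed

end
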